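(* Let Assumption (A) be satisfied. Then the Pareto frontier of the multi-criteria minimization problem with objectives $f\mapsto\mathcal R(f)$ and $f\mapsto\mathcal U(f)$ is $\{f^*_\alpha\}_{\alpha\in[0,1]}$, where predictions with identical values of $(\mathcal R,\mathcal U)$ are identified.
   Context: Setting: $(\boldsymbol X,S)$ random in $\mathbb R^p\times[K]$ with $\mathbb P(S=s)>0$; $f^*:\mathbb R^p\times[K]\to\mathbb R$ measurable; $\boldsymbol w\in\Delta^{K-1}$. For measurable $f$: $\mathcal R(f)=\sum_sw_s\mathbb E[(f(\boldsymbol X,S)-f^*(\boldsymbol X,S))^2\mid S=s]$, $\mathcal U(f)=\min_{\nu\in\mathcal P_2(\mathbb R)}\sum_sw_s\mathsf W_2^2(\mathrm{Law}(f(\boldsymbol X,S)\mid S=s),\nu)$ ($\mathsf W_2$ Wasserstein-2). $\nu^*_s=\mathrm{Law}(f^*(\boldsymbol X,S)\mid S=s)$. (A): each $\nu^*_s$ is non-atomic with finite second moment. $f^*_\alpha$ is a minimizer of $\mathcal R(f)$ subject to $\mathcal U(f)\le\alpha\,\mathcal U(f^* )$; explicitly $f^*_\alpha(\boldsymbol x,s)=\sqrt\alpha f^*(\boldsymbol x,s)+(1-\sqrt\alpha)\sum_{s'}w_{s'}F^{-1}_{\nu^*_{s'}}\circ F_{\nu^*_s}\circ f^*(\boldsymbol x,s)$ with $F_\mu$ the CDF and $F^{-1}_\mu$ the generalized inverse. $f$ Pareto dominates $f'$ if either ($\mathcal R(f)\le\mathcal R(f')$ and $\mathcal U(f)<\mathcal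 U(f')$) or ($\mathcal R(f)<\mathcal R(f')$ and $\mathcal U(f)\le\mathcal U(f')$). $f$ is Pareto efficient if no prediction Pareto dominates it; the Pareto frontier is the set of Pareto efficient predictions. *)

theory Defs
  imports "HOL-Probability.Probability"
begin

definition cond_meas :: "'a measure \<Rightarrow> ('a \<Rightarrow> 'k) \<Rightarrow> 'k \<Rightarrow> 'a measure" where
  "cond_meas M S s = uniform_measure M {\<omega> \<in> space M. S \<omega> = s}"

definition cond_law ::
  "'a measure \<Rightarrow> ('a \<Rightarrow> 'x) \<Rightarrow> ('a \<Rightarrow> 'k) \<Rightarrow> ('x \<Rightarrow> 'k \<Rightarrow> real) \<Rightarrow> 'k \<Rightarrow> real measure" where
  "cond_law M X S f s = distr (cond_meas M S s) borel (\<lambda>\<omega>. f (X \<omega>) (S \<omega>))"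

text \<open>Measurable predictions R^p x [K] -> R (the index set is discrete).\<close>
definition pred_measurable :: "(('p::euclidean_space) \<Rightarrow> 'k \<Rightarrow> real) \<Rightarrow> bool" where
  "pred_measurable f \<longleftrightarrow> (\<forall>s. (\<lambda>x. f x s) \<in> borel_measurable borel)"

definition risk ::
  "'a measure \<Rightarrow> ('a \<Rightarrow> 'x) \<Rightarrow> ('a \<Rightarrow> 'k::finite) \<Rightarrow> ('k \<Rightarrow> real) \<Rightarrow> ('x \<Rightarrow> 'k \<Rightarrow> real)
    \<Rightarrow> ('x \<Rightarrow> 'k \<Rightarrow> real) \<Rightarrow> ennreal" where
  "risk M X S w fstar f =
     (\<Sum>s\<in>UNIV. ennreal (w s) *
        (\<integral>\<^sup>+\<omega>. ennreal ((f (X \<omega>) (S \<omega>) - fstar (X \<omega>) (S \<omega>))\<^sup>2) \<partial>cond_meas M S s))"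

definition P2 :: "real measure set" where
  "P2 = {\<nu>. prob_space \<nu> \<and> sets \<nu> = sets borel \<and> (\<integral>\<^sup>+x. ennreal (x\<^sup>2) \<partial>\<nu>) < \<top>}"

definition couplings :: "real measure \<Rightarrow> real measure \<Rightarrow> (real \<times> real) measure set" where
  "couplings \<mu> \<nu> = {\<gamma>. prob_space \<gamma> \<and> sets \<gamma> = sets (borel :: (real \<times> real) measure) \<and>
                        distr \<gamma> borel fst = \<mu> \<and> distr \<gamma> borel snd = \<nu>}"

definition W2sq :: "real measure \<Rightarrow> real measure \<Rightarrow> ennreal" where
  "W2sq \<mu> \<nu> = (INF \<gamma>\<in>couplings \<mu> \<nu>. \<integral>\<^sup>+p. ennreal ((fst p - snd p)\<^sup>2) \<partial>\<gamma>)"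

definition unfairness ::
  "'a measure \<Rightarrow> ('a \<Rightarrow> 'x) \<Rightarrow> ('a \<Rightarrow> 'k::finite) \<Rightarrow> ('k \<Rightarrow> real) \<Rightarrow> ('x \<Rightarrow> 'k \<Rightarrow> real) \<Rightarrow> ennreal" where
  "unfairness M X S w f =
     (INF \<nu>\<in>P2. \<Sum>s\<in>UNIV. ennreal (w s) * W2sq (cond_law M X S f s) \<nu>)"

definition pareto_dominates ::
  "'a measure \<Rightarrow> ('a \<Rightarrow> 'x) \<Rightarrow> ('a \<Rightarrow> 'k::finite) \<Rightarrow> ('k \<Rightarrow> real) \<Rightarrow> ('x \<Rightarrow> 'k \<Rightarrow> real)
    \<Rightarrow> ('x \<Rightarrow> 'k \<Rightarrow> real) \<Rightarrow> ('x \<Rightarrow> 'k \<Rightarrow> real) \<Rightarrow> bool" where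
  "pareto_dominates M X S w fstar f f' \<longleftrightarrow>
     (risk M X S w fstar f \<le> risk M X S w fstar f' \<and> unfairness M X S w f < unfairness M X S w f') \<or>
     (risk M X S w fstar f < risk M X S w fstar f' \<and> unfairness M X S w f \<le> unfairness M X S w f')"

definition pareto_efficient ::
  "'a measure \<Rightarrow> ('a \<Rightarrow> 'p::euclidean_space) \<Rightarrow> ('a \<Rightarrow> 'k::finite) \<Rightarrow> ('k \<Rightarrow> real)
    \<Rightarrow> ('p \<Rightarrow> 'k \<Rightarrow> real) \<Rightarrow> ('p \<Rightarrow> 'k \<Rightarrow> real) \<Rightarrow> bool" where
  "pareto_efficient M X S w fstar f \<longleftrightarrow>
     pred_measurable f \<and> \<not> (\<exists>g. pred_measurable g \<and> pareto_dominates M X S w fstar g f)"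

definition nonatomic :: "'b measure \<Rightarrow> bool" where
  "nonatomic \<mu> \<longleftrightarrow>
     \<not> (\<exists>A\<in>sets \<mu>. emeasure \<mu> A > 0 \<and>
          (\<forall>B\<in>sets \<mu>. B \<subseteq> A \<longrightarrow> emeasure \<mu> B = 0 \<or> emeasure \<mu> B = emeasure \<mu> A))"

definition gen_inv :: "real measure \<Rightarrow> real \<Rightarrow> real" where
  "gen_inv \<mu> t = Inf {x. t \<le> cdf \<mu> x}"

definition assumption_A ::
  "'a measure \<Rightarrow> ('a \<Rightarrow> 'x) \<Rightarrow> ('a \<Rightarrow> 'k) \<Rightarrow> ('x \<Rightarrow> 'k \<Rightarrow> real) \<Rightarrow> bool" where
  "assumption_A M X S fstar \<longleftrightarrow>
     (\<forall>s. nonatomic (cond_law M X S fstar s) \<and>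
          (\<integral>\<^sup>+y. ennreal (y\<^sup>2) \<partial>cond_law M X S fstar s) < \<top>)"

definition f_alpha ::
  "'a measure \<Rightarrow> ('a \<Rightarrow> 'x) \<Rightarrow> ('a \<Rightarrow> 'k::finite) \<Rightarrow> ('k \<Rightarrow> real) \<Rightarrow> ('x \<Rightarrow> 'k \<Rightarrow> real)
    \<Rightarrow> real \<Rightarrow> 'x \<Rightarrow> 'k \<Rightarrow> real" where
  "f_alpha M X S w fstar \<alpha> x s =
     sqrt \<alpha> * fstar x s +
     (1 - sqrt \<alpha>) * (\<Sum>s'\<in>UNIV. w s' *
        gen_inv (cond_law M X S fstar s') (cdf (cond_law M X S fstar s) (fstar x s)))"

end

theory Submission
  imports Defs
begin


abbreviation Q01 :: "real measure" where "Q01 \<equiv> restrict_space lborel {0<..<1::real}"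

lemma prob_Q01: "prob_space Q01"
  by (auto simp add: emeasure_restrict_space space_restrict_space intro!: prob_spaceI)

lemma space_Q01: "space Q01 = {0<..<1}"
  by (simp add: space_restrict_space)

lemma rd_cdf_distribution: "real_distribution \<mu> \<Longrightarrow> cdf_distribution \<mu>"
  by (simp add: cdf_distribution_def)

lemma rd_rcm:
  assumes "real_distribution \<mu>" shows "right_continuous_mono (cdf \<mu>) 0 1"
proof -
  have fb: "finite_borel_measure \<mu>" by (rule real_distribution.finite_borel_measure_M[OF assms])
  show ?thesis
  proof (rule right_continuous_mono.intro)
    show "continuous (at_right x) (cdf \<mu>)" for x by (rule finite_borel_measure.cdf_is_right_cont[OF fb])
    show "mono (cdf \<mu>)" by (rule monoI, rule finite_borel_measure.cdf_nondecreasing[OF fb])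
    show "(cdf \<mu> \<longlongrightarrow> 0) at_bot" by (rule finite_borel_measure.cdf_lim_at_bot[OF fb])
    show "(cdf \<mu> \<longlongrightarrow> 1) at_top" by (rule real_distribution.cdf_lim_at_top_prob[OF assms])
  qed
qed

lemma gen_inv_galois:
  assumes "real_distribution \<mu>" "0 < t" "t < 1"
  shows "gen_inv \<mu> t \<le> x \<longleftrightarrow> t \<le> cdf \<mu> x"
  unfolding gen_inv_def
  by (rule right_continuous_mono.pseudoinverse[OF rd_rcm[OF assms(1)] assms(2,3), symmetric])

lemma distr_gen_inv:
  assumes "real_distribution \<mu>"
  shows "distr Q01 borel (gen_inv \<mu>) = \<mu>"
  using cdf_distribution.distr_I_eq_M[OF rd_cdf_distribution[OF assms]]
  unfolding gen_inv_def[abs_def] .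

lemma s1: "{x \<in> space borel. 0 < x \<and> x < (1::real)} \<in> sets borel" by measurable
lemma s2: "{x \<in> space borel. x \<le> (0::real)} \<in> sets borel" by measurable
lemma s3: "{x \<in> space borel. x = (1::real)} \<in> sets borel" by measurable
lemma m2: "(\<lambda>t::real. if t \<le> 0 then a else if t = 1 then b else (c::real)) \<in> borel_measurable borel"
  by (intro measurable_If measurable_const s2 s3) auto

lemma gen_inv_measurable[measurable]:
  assumes "real_distribution \<mu>"
  shows "gen_inv \<mu> \<in> borel_measurable borel"
proof -
  have fb: "finite_borel_measure \<mu>" by (rule real_distribution.finite_borel_measure_M[OF assms])
  have eq: "gen_inv \<mu> t = (if 0 < t \<and> t < 1 then gen_inv \<mu> t else
       if t \<le> 0 then Inf UNIV else if t = 1 then gen_inv \<mu> 1 else Inf {})" for t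
  proof -
    have "{x. t \<le> cdf \<mu> x} = UNIV" if "t \<le> 0"
    proof -
      have "t \<le> cdf \<mu> x" for x using finite_borel_measure.cdf_nonneg[OF fb, of x] that by linarith
      then show ?thesis by auto
    qed
    moreover have "{x. t \<le> cdf \<mu> x} = {}" if "1 < t"
    proof -
      have "\<not> t \<le> cdf \<mu> x" for x
        using real_distribution.cdf_bounded_prob[OF assms, of x] that by linarith
      then show ?thesis by auto
    qed
    ultimately show ?thesis
      unfolding gen_inv_def by auto
  qed
  have "{0<..<1::real} = {x. 0 < x \<and> x < 1}" by auto
  then have m: "gen_inv \<mu> \<in> borel_measurable (restrict_space borel {x. 0 < x \<and> x < 1})"
    using cdf_distribution.measurable_CI[OF rd_cdf_distribution[OF assms]]
    unfolding gen_inv_def[abs_def] by simp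
  have "(\<lambda>t. if 0 < t \<and> t < 1 then gen_inv \<mu> t else
       if t \<le> 0 then Inf UNIV else if t = 1 then gen_inv \<mu> 1 else Inf {}) \<in> borel_measurable borel"
    by (rule measurable_If_restrict_space_iff[OF s1, THEN iffD2], rule conjI[OF m],
        rule measurable_restrict_space1[OF m2])
  then show ?thesis unfolding eq[symmetric] by simp
qed

lemma nonatomic_singleton:
  assumes "nonatomic \<mu>" "{x} \<in> sets \<mu>"
  shows "emeasure \<mu> {x} = 0"
proof (rule ccontr)
  assume "emeasure \<mu> {x} \<noteq> 0"
  then have "emeasure \<mu> {x} > 0" by (simp add: zero_less_iff_neq_zero)
  moreover have "\<forall>B\<in>sets \<mu>. B \<subseteq> {x} \<longrightarrow> emeasure \<mu> B = 0 \<or> emeasure \<mu> B = emeasure \<mu> {x}"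
  proof (intro ballI impI)
    fix B assume "B \<subseteq> {x}"
    then have "B = {} \<or> B = {x}" by (rule subset_singletonD)
    then show "emeasure \<mu> B = 0 \<or> emeasure \<mu> B = emeasure \<mu> {x}" by auto
  qed
  ultimately have "\<exists>A\<in>sets \<mu>. emeasure \<mu> A > 0 \<and>
          (\<forall>B\<in>sets \<mu>. B \<subseteq> A \<longrightarrow> emeasure \<mu> B = 0 \<or> emeasure \<mu> B = emeasure \<mu> A)"
    using assms(2) by (intro bexI[of _ "{x}"]) auto
  then show False using assms(1) unfolding nonatomic_def by simp
qed

lemma cdf_gen_inv:
  assumes "real_distribution \<mu>" "nonatomic \<mu>" "0 < t" "t < 1"
  shows "cdf \<mu> (gen_inv \<mu> t) = t"
proof -
  have fb: "finite_borel_measure \<mu>" by (rule real_distribution.finite_borel_measure_M[OF assms(1)])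
  have ge: "t \<le> cdf \<mu> (gen_inv \<mu> t)"
    using gen_inv_galois[OF assms(1,3,4), of "gen_inv \<mu> t"] by simp
  have sb: "{gen_inv \<mu> t} \<in> sets \<mu>"
    using real_distribution.events_eq_borel[OF assms(1)] by simp
  have "measure \<mu> {gen_inv \<mu> t} = 0"
    using nonatomic_singleton[OF assms(2) sb] by (simp add: measure_def)
  then have cont: "isCont (cdf \<mu>) (gen_inv \<mu> t)"
    using finite_borel_measure.isCont_cdf[OF fb] by simp
  have lim: "((cdf \<mu>) \<longlongrightarrow> cdf \<mu> (gen_inv \<mu> t)) (at_left (gen_inv \<mu> t))"
    using cont by (simp add: isCont_def filterlim_at_split)
  have ev: "eventually (\<lambda>x. cdf \<mu> x \<le> t) (at_left (gen_inv \<mu> t))"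
  proof -
    have "cdf \<mu> x \<le> t" if "x < gen_inv \<mu> t" for x
      using gen_inv_galois[OF assms(1,3,4), of x] that by linarith
    then show ?thesis unfolding eventually_at_left_field
      by (intro exI[of _ "gen_inv \<mu> t - 1"]) simp
  qed
  have "cdf \<mu> (gen_inv \<mu> t) \<le> t"
    by (rule tendsto_upperbound[OF lim ev trivial_limit_at_left_real])
  with ge show ?thesis by simp
qed


definition Ed :: "real \<Rightarrow> real \<Rightarrow> (real \<times> real) set" where
  "Ed a b = {p. min (fst p) (snd p) \<le> a \<and> a < max (fst p) (snd p) \<and>
                min (fst p) (snd p) \<le> b \<and> b < max (fst p) (snd p)}"

abbreviation L2 :: "(real \<times> real) measure" where "L2 \<equiv> lborel \<Otimes>\<^sub>M lborel"

lemma Ed_measurable_prod: "Ed a b \<in> sets (borel \<Otimes>\<^sub>M borel)"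
proof -
  have "{p \<in> space (borel \<Otimes>\<^sub>M borel). min (fst p) (snd p) \<le> a \<and> a < max (fst p) (snd p) \<and>
                min (fst p) (snd p) \<le> b \<and> b < max (fst p) (snd p)} \<in> sets (borel \<Otimes>\<^sub>M (borel::real measure))"
    by measurable
  then show ?thesis by (simp add: Ed_def space_pair_measure)
qed

lemma Ed_measurable[measurable]: "Ed a b \<in> sets borel"
  using Ed_measurable_prod unfolding borel_prod .

lemma Ed_pred_measurable:
  assumes S: "sets \<pi> = sets (borel :: (real \<times> real) measure)"
  shows "(\<lambda>(p, z). indicator (Ed (fst z) (snd z)) p :: ennreal) \<in> borel_measurable (\<pi> \<Otimes>\<^sub>M L2)"
proof -
  have [measurable_cong]: "sets \<pi> = sets (borel \<Otimes>\<^sub>M (borel::real measure))"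
    unfolding borel_prod by (rule S)
  show ?thesis unfolding Ed_def indicator_def by measurable
qed

lemma Ed_ind: "indicator (Ed a b) (x, y) = (indicator {min x y..<max x y} a * indicator {min x y..<max x y} b :: ennreal)"
  by (auto simp: Ed_def indicator_def)

lemma Ed_z_measurable:
  "(\<lambda>z. indicator (Ed (fst z) (snd z)) (x, y) :: ennreal) \<in> borel_measurable L2"
  unfolding Ed_def indicator_def by measurable

lemma sq_as_integral:
  "ennreal ((x - y)\<^sup>2) = (\<integral>\<^sup>+z. indicator (Ed (fst z) (snd z)) (x, y) \<partial>L2)"
proof -
  let ?m = "min x y" and ?M = "max x y"
  have "(\<integral>\<^sup>+z. indicator (Ed (fst z) (snd z)) (x, y) \<partial>L2) =
        (\<integral>\<^sup>+a. \<integral>\<^sup>+b. indicator (Ed a b) (x, y) \<partial>lborel \<partial>lborel)"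
    using lborel.nn_integral_fst[OF Ed_z_measurable[of x y]] by simp
  also have "\<dots> = (\<integral>\<^sup>+a. indicator {?m..<?M} a * ennreal (?M - ?m) \<partial>lborel)"
    by (simp add: Ed_ind nn_integral_cmult)
  also have "\<dots> = ennreal (?M - ?m) * ennreal (?M - ?m)"
    by (simp add: nn_integral_multc)
  also have "\<dots> = ennreal ((x - y)\<^sup>2)"
    by (simp add: ennreal_mult[symmetric] power2_eq_square max_def min_def algebra_simps)
  finally show ?thesis ..
qed

lemma sq_integral_Ed:
  assumes S[measurable_cong]: "sets \<pi> = sets (borel :: (real \<times> real) measure)" and "finite_measure \<pi>"
  shows "(\<integral>\<^sup>+p. ennreal ((fst p - snd p)\<^sup>2) \<partial>\<pi>) = (\<integral>\<^sup>+z. emeasure \<pi> (Ed (fst z) (snd z)) \<partial>L2)"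
proof -
  interpret pair_sigma_finite \<pi> L2
    by (intro pair_sigma_finite.intro finite_measure.axioms(1)[OF assms(2)] sigma_finite_pair_measure
        lborel.sigma_finite_measure_axioms)
  have "(\<integral>\<^sup>+p. ennreal ((fst p - snd p)\<^sup>2) \<partial>\<pi>) =
        (\<integral>\<^sup>+p. \<integral>\<^sup>+z. indicator (Ed (fst z) (snd z)) p \<partial>L2 \<partial>\<pi>)"
    by (rule nn_integral_cong) (simp add: sq_as_integral)
  also have "\<dots> = (\<integral>\<^sup>+z. \<integral>\<^sup>+p. indicator (Ed (fst z) (snd z)) p \<partial>\<pi> \<partial>L2)"
    by (rule Fubini'[symmetric]) (use Ed_pred_measurable[OF S] in simp)
  also have "\<dots> = (\<integral>\<^sup>+z. emeasure \<pi> (Ed (fst z) (snd z)) \<partial>L2)"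
    by (rule nn_integral_cong) (simp add: S)
  finally show ?thesis .
qed


lemma sets_borel_pairI:
  "{p \<in> space (borel \<Otimes>\<^sub>M borel). Q p} \<in> sets (borel \<Otimes>\<^sub>M (borel::real measure)) \<Longrightarrow>
   {p. Q p} \<in> sets (borel :: (real \<times> real) measure)"
  unfolding borel_prod by (simp add: space_borel)

lemma gen_inv_Q01_meas: "real_distribution \<mu> \<Longrightarrow> gen_inv \<mu> \<in> borel_measurable Q01"
  by (rule measurable_restrict_space1)
     (simp add: measurable_cong_sets[OF sets_lborel refl] gen_inv_measurable)

lemma quant_meas:
  assumes "real_distribution \<mu>" "real_distribution \<nu>"
  shows "(\<lambda>t. (gen_inv \<mu> t, gen_inv \<nu> t)) \<in> measurable Q01 (borel :: (real \<times> real) measure)"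
proof -
  have "(\<lambda>t. (gen_inv \<mu> t, gen_inv \<nu> t)) \<in> measurable Q01 (borel \<Otimes>\<^sub>M borel)"
    by (intro measurable_Pair gen_inv_Q01_meas assms)
  then show ?thesis unfolding borel_prod .
qed

lemma fst_meas:
  assumes "sets \<gamma> = sets (borel :: (real \<times> real) measure)" shows "fst \<in> borel_measurable \<gamma>"
proof -
  have e: "sets \<gamma> = sets (borel \<Otimes>\<^sub>M (borel::real measure))" unfolding borel_prod by (rule assms)
  show ?thesis by (subst measurable_cong_sets[OF e refl]) (rule measurable_fst)
qed

lemma snd_meas:
  assumes "sets \<gamma> = sets (borel :: (real \<times> real) measure)" shows "snd \<in> borel_measurable \<gamma>"
proof -
  have e: "sets \<gamma> = sets (borel \<Otimes>\<^sub>M (borel::real measure))" unfolding borel_prod by (rule assms)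
  show ?thesis by (subst measurable_cong_sets[OF e refl]) (rule measurable_snd)
qed

lemma lborel_Ioc_le: "emeasure lborel {x<..y::real} \<le> ennreal (max 0 (y - x))"
proof (cases "x \<le> y")
  case True then show ?thesis by simp
next
  case False then have "{x<..y} = {}" by auto
  then show ?thesis by simp
qed

definition Dlow :: "real measure \<Rightarrow> real measure \<Rightarrow> real \<Rightarrow> real \<Rightarrow> real" where
  "Dlow \<mu> \<nu> a b = max 0 (cdf \<mu> (min a b) - cdf \<nu> (max a b)) + max 0 (cdf \<nu> (min a b) - cdf \<mu> (max a b))"

lemma Ed_split:
  "Ed a b = {p. fst p \<le> min a b \<and> max a b < snd p} \<union> {p. snd p \<le> min a b \<and> max a b < fst p}"
  by (auto simp: Ed_def min_def max_def split: if_splits)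

lemma coupling_marg_fst:
  assumes "\<gamma> \<in> couplings \<mu> \<nu>"
  shows "measure \<gamma> {p. fst p \<le> x} = cdf \<mu> x"
proof -
  have S: "sets \<gamma> = sets borel" and D: "distr \<gamma> borel fst = \<mu>" using assms by (auto simp: couplings_def)
  have sp: "space \<gamma> = UNIV" using sets_eq_imp_space_eq[OF S] by simp
  have "cdf \<mu> x = measure (distr \<gamma> borel fst) {..x}" using D by (simp add: cdf_def)
  also have "\<dots> = measure \<gamma> (fst -` {..x} \<inter> space \<gamma>)"
    by (rule measure_distr[OF fst_meas[OF S]]) simp
  also have "fst -` {..x} \<inter> space \<gamma> = {p. fst p \<le> x}" using sp by auto
  finally show ?thesis ..
qed

lemma coupling_marg_snd:
  assumes "\<gamma> \<in> couplings \<mu> \<nu>"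
  shows "measure \<gamma> {p. snd p \<le> x} = cdf \<nu> x"
proof -
  have S: "sets \<gamma> = sets borel" and D: "distr \<gamma> borel snd = \<nu>" using assms by (auto simp: couplings_def)
  have sp: "space \<gamma> = UNIV" using sets_eq_imp_space_eq[OF S] by simp
  have "cdf \<nu> x = measure (distr \<gamma> borel snd) {..x}" using D by (simp add: cdf_def)
  also have "\<dots> = measure \<gamma> (snd -` {..x} \<inter> space \<gamma>)"
    by (rule measure_distr[OF snd_meas[OF S]]) simp
  also have "snd -` {..x} \<inter> space \<gamma> = {p. snd p \<le> x}" using sp by auto
  finally show ?thesis ..
qed

lemma coupling_lower:
  assumes "\<gamma> \<in> couplings \<mu> \<nu>"
  shows "ennreal (Dlow \<mu> \<nu> a b) \<le> emeasure \<gamma> (Ed a b)"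
proof -
  have S: "sets \<gamma> = sets borel" and P: "prob_space \<gamma>" using assms by (auto simp: couplings_def)
  interpret prob_space \<gamma> by (rule P)
  define a' where "a' = min a b"
  define b' where "b' = max a b"
  have ab: "a' \<le> b'" by (simp add: a'_def b'_def)
  define E1 where "E1 = {p::real\<times>real. fst p \<le> a' \<and> b' < snd p}"
  define E2 where "E2 = {p::real\<times>real. snd p \<le> a' \<and> b' < fst p}"
  have m1: "{p::real\<times>real. fst p \<le> x} \<in> sets \<gamma>" for x
    unfolding S by (rule sets_borel_pairI) measurable
  have m2: "{p::real\<times>real. snd p \<le> x} \<in> sets \<gamma>" for x
    unfolding S by (rule sets_borel_pairI) measurable
  have m3: "E1 \<in> sets \<gamma>"
    unfolding S E1_def by (rule sets_borel_pairI) measurable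
  have m4: "E2 \<in> sets \<gamma>"
    unfolding S E2_def by (rule sets_borel_pairI) measurable
  note m = m1 m2 m3 m4
  have e: "Ed a b = E1 \<union> E2" unfolding Ed_split E1_def E2_def a'_def b'_def ..
  have dj: "E1 \<inter> E2 = {}" using ab by (auto simp: E1_def E2_def)
  have l1: "max 0 (cdf \<mu> a' - cdf \<nu> b') \<le> measure \<gamma> E1"
  proof -
    have "{p::real\<times>real. fst p \<le> a'} \<subseteq> E1 \<union> {p. snd p \<le> b'}" by (auto simp: E1_def)
    then have "measure \<gamma> {p::real\<times>real. fst p \<le> a'} \<le> measure \<gamma> (E1 \<union> {p. snd p \<le> b'})"
      by (intro finite_measure_mono sets.Un m)
    also have "\<dots> \<le> measure \<gamma> E1 + measure \<gamma> {p. snd p \<le> b'}"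
      by (intro measure_subadditive m) (simp_all add: emeasure_eq_measure)
    finally show ?thesis
      using coupling_marg_fst[OF assms, of a'] coupling_marg_snd[OF assms, of b'] by simp
  qed
  have l2: "max 0 (cdf \<nu> a' - cdf \<mu> b') \<le> measure \<gamma> E2"
  proof -
    have "{p::real\<times>real. snd p \<le> a'} \<subseteq> E2 \<union> {p. fst p \<le> b'}" by (auto simp: E2_def)
    then have "measure \<gamma> {p::real\<times>real. snd p \<le> a'} \<le> measure \<gamma> (E2 \<union> {p. fst p \<le> b'})"
      by (intro finite_measure_mono sets.Un m)
    also have "\<dots> \<le> measure \<gamma> E2 + measure \<gamma> {p. fst p \<le> b'}"
      by (intro measure_subadditive m) (simp_all add: emeasure_eq_measure)
    finally show ?thesis
      using coupling_marg_fst[OF assms, of b'] coupling_marg_snd[OF assms, of a'] by simp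
  qed
  have "measure \<gamma> (Ed a b) = measure \<gamma> E1 + measure \<gamma> E2"
    unfolding e by (rule finite_measure_Union[OF m3 m4 dj])
  moreover have "Dlow \<mu> \<nu> a b \<le> measure \<gamma> E1 + measure \<gamma> E2"
    unfolding Dlow_def using l1 l2 unfolding a'_def b'_def by (rule add_mono)
  ultimately have "Dlow \<mu> \<nu> a b \<le> measure \<gamma> (Ed a b)" by simp
  then show ?thesis by (simp add: emeasure_eq_measure)
qed


lemma sqdiff_meas[measurable]: "(\<lambda>p::real\<times>real. ennreal ((fst p - snd p)\<^sup>2)) \<in> borel_measurable borel"
proof -
  have "(\<lambda>p::real\<times>real. ennreal ((fst p - snd p)\<^sup>2)) \<in> borel_measurable (borel \<Otimes>\<^sub>M borel)" by measurable
  then show ?thesis unfolding borel_prod .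
qed

lemma quant_upper:
  assumes rm: "real_distribution \<mu>" and rn: "real_distribution \<nu>"
  shows "emeasure (distr Q01 borel (\<lambda>t. (gen_inv \<mu> t, gen_inv \<nu> t))) (Ed a b) \<le> ennreal (Dlow \<mu> \<nu> a b)"
proof -
  let ?f = "\<lambda>t. (gen_inv \<mu> t, gen_inv \<nu> t)"
  let ?q = "distr Q01 borel ?f"
  have sm: "(\<lambda>p::real\<times>real. ennreal ((fst p - snd p)\<^sup>2)) \<in> borel_measurable ?q"
    by (subst measurable_distr_eq1) (rule sqdiff_meas)
  define a' where "a' = min a b"
  define b' where "b' = max a b"
  define E1 where "E1 = {p::real\<times>real. fst p \<le> a' \<and> b' < snd p}"
  define E2 where "E2 = {p::real\<times>real. snd p \<le> a' \<and> b' < fst p}"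
  have m3: "E1 \<in> sets borel"
    unfolding E1_def by (rule sets_borel_pairI) measurable
  have m4: "E2 \<in> sets borel"
    unfolding E2_def by (rule sets_borel_pairI) measurable
  have e: "Ed a b = E1 \<union> E2" unfolding Ed_split E1_def E2_def a'_def b'_def ..
  have om: "{0<..<1::real} \<inter> space lborel \<in> sets lborel" by simp
  have u1: "emeasure ?q E1 \<le> ennreal (max 0 (cdf \<mu> a' - cdf \<nu> b'))"
  proof -
    have "emeasure ?q E1 = emeasure Q01 (?f -` E1 \<inter> space Q01)"
      by (rule emeasure_distr[OF quant_meas[OF rm rn] m3])
    also have "\<dots> = emeasure lborel (?f -` E1 \<inter> space Q01)"
      by (rule emeasure_restrict_space[OF om]) (auto simp: space_restrict_space)
    also have "\<dots> \<le> emeasure lborel {cdf \<nu> b' <.. cdf \<mu> a'}"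
    proof (rule emeasure_mono)
      show "?f -` E1 \<inter> space Q01 \<subseteq> {cdf \<nu> b'<..cdf \<mu> a'}"
      proof
        fix t assume "t \<in> ?f -` E1 \<inter> space Q01"
        then have t: "0 < t" "t < 1" "gen_inv \<mu> t \<le> a'" "\<not> gen_inv \<nu> t \<le> b'"
          by (auto simp: E1_def space_restrict_space)
        show "t \<in> {cdf \<nu> b'<..cdf \<mu> a'}"
          using t gen_inv_galois[OF rm t(1,2), of a'] gen_inv_galois[OF rn t(1,2), of b'] by auto
      qed
    qed simp
    also have "\<dots> \<le> ennreal (max 0 (cdf \<mu> a' - cdf \<nu> b'))" by (rule lborel_Ioc_le)
    finally show ?thesis .
  qed
  have u2: "emeasure ?q E2 \<le> ennreal (max 0 (cdf \<nu> a' - cdf \<mu> b'))"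
  proof -
    have "emeasure ?q E2 = emeasure Q01 (?f -` E2 \<inter> space Q01)"
      by (rule emeasure_distr[OF quant_meas[OF rm rn] m4])
    also have "\<dots> = emeasure lborel (?f -` E2 \<inter> space Q01)"
      by (rule emeasure_restrict_space[OF om]) (auto simp: space_restrict_space)
    also have "\<dots> \<le> emeasure lborel {cdf \<mu> b' <.. cdf \<nu> a'}"
    proof (rule emeasure_mono)
      show "?f -` E2 \<inter> space Q01 \<subseteq> {cdf \<mu> b'<..cdf \<nu> a'}"
      proof
        fix t assume "t \<in> ?f -` E2 \<inter> space Q01"
        then have t: "0 < t" "t < 1" "gen_inv \<nu> t \<le> a'" "\<not> gen_inv \<mu> t \<le> b'"
          by (auto simp: E2_def space_restrict_space)
        show "t \<in> {cdf \<mu> b'<..cdf \<nu> a'}"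
          using t gen_inv_galois[OF rn t(1,2), of a'] gen_inv_galois[OF rm t(1,2), of b'] by auto
      qed
    qed simp
    also have "\<dots> \<le> ennreal (max 0 (cdf \<nu> a' - cdf \<mu> b'))" by (rule lborel_Ioc_le)
    finally show ?thesis .
  qed
  have "emeasure ?q (Ed a b) \<le> emeasure ?q E1 + emeasure ?q E2"
    unfolding e by (rule emeasure_subadditive) (simp_all add: m3 m4)
  also have "\<dots> \<le> ennreal (max 0 (cdf \<mu> a' - cdf \<nu> b')) + ennreal (max 0 (cdf \<nu> a' - cdf \<mu> b'))"
    by (rule add_mono[OF u1 u2])
  also have "\<dots> = ennreal (Dlow \<mu> \<nu> a b)"
    unfolding Dlow_def a'_def b'_def by (simp add: ennreal_plus)
  finally show ?thesis .
qed

lemma quant_coupling: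
  assumes rm: "real_distribution \<mu>" and rn: "real_distribution \<nu>"
  shows "distr Q01 borel (\<lambda>t. (gen_inv \<mu> t, gen_inv \<nu> t)) \<in> couplings \<mu> \<nu>"
proof -
  let ?f = "\<lambda>t. (gen_inv \<mu> t, gen_inv \<nu> t)"
  have fm: "?f \<in> measurable Q01 borel" by (rule quant_meas[OF rm rn])
  have "distr (distr Q01 borel ?f) borel fst = distr Q01 borel (fst \<circ> ?f)"
    by (rule distr_distr[OF fst_meas[OF refl] fm])
  also have "\<dots> = \<mu>" using distr_gen_inv[OF rm] by (simp add: comp_def)
  finally have 1: "distr (distr Q01 borel ?f) borel fst = \<mu>" .
  have "distr (distr Q01 borel ?f) borel snd = distr Q01 borel (snd \<circ> ?f)"
    by (rule distr_distr[OF snd_meas[OF refl] fm])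
  also have "\<dots> = \<nu>" using distr_gen_inv[OF rn] by (simp add: comp_def)
  finally have 2: "distr (distr Q01 borel ?f) borel snd = \<nu>" .
  have 3: "prob_space (distr Q01 borel ?f)"
    by (rule prob_space.prob_space_distr[OF prob_Q01 fm])
  show ?thesis using 1 2 3 by (simp add: couplings_def)
qed

lemma W2_lower:
  assumes rm: "real_distribution \<mu>" and rn: "real_distribution \<nu>" and g: "\<gamma> \<in> couplings \<mu> \<nu>"
  shows "(\<integral>\<^sup>+t. ennreal ((gen_inv \<mu> t - gen_inv \<nu> t)\<^sup>2) \<partial>Q01) \<le> (\<integral>\<^sup>+p. ennreal ((fst p - snd p)\<^sup>2) \<partial>\<gamma>)"
proof -
  let ?f = "\<lambda>t. (gen_inv \<mu> t, gen_inv \<nu> t)"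
  let ?q = "distr Q01 borel ?f"
  have sm: "(\<lambda>p::real\<times>real. ennreal ((fst p - snd p)\<^sup>2)) \<in> borel_measurable ?q"
    by (subst measurable_distr_eq1) (rule sqdiff_meas)
  have qc: "?q \<in> couplings \<mu> \<nu>" by (rule quant_coupling[OF rm rn])
  have "(\<integral>\<^sup>+t. ennreal ((gen_inv \<mu> t - gen_inv \<nu> t)\<^sup>2) \<partial>Q01) = (\<integral>\<^sup>+p. ennreal ((fst p - snd p)\<^sup>2) \<partial>?q)"
    by (subst nn_integral_distr[OF quant_meas[OF rm rn] sm]) simp
  also have "\<dots> = (\<integral>\<^sup>+z. emeasure ?q (Ed (fst z) (snd z)) \<partial>L2)"
    using qc by (intro sq_integral_Ed) (auto simp: couplings_def prob_space_def)
  also have "\<dots> \<le> (\<integral>\<^sup>+z. emeasure \<gamma> (Ed (fst z) (snd z)) \<partial>L2)"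
    by (intro nn_integral_mono order.trans[OF quant_upper[OF rm rn] coupling_lower[OF g]])
  also have "\<dots> = (\<integral>\<^sup>+p. ennreal ((fst p - snd p)\<^sup>2) \<partial>\<gamma>)"
    using g by (intro sq_integral_Ed[symmetric]) (auto simp: couplings_def prob_space_def)
  finally show ?thesis .
qed

lemma W2_formula:
  assumes rm: "real_distribution \<mu>" and rn: "real_distribution \<nu>"
  shows "W2sq \<mu> \<nu> = (\<integral>\<^sup>+t. ennreal ((gen_inv \<mu> t - gen_inv \<nu> t)\<^sup>2) \<partial>Q01)"
proof (rule antisym)
  let ?f = "\<lambda>t. (gen_inv \<mu> t, gen_inv \<nu> t)"
  let ?q = "distr Q01 borel ?f"
  have sm: "(\<lambda>p::real\<times>real. ennreal ((fst p - snd p)\<^sup>2)) \<in> borel_measurable ?q"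
    by (subst measurable_distr_eq1) (rule sqdiff_meas)
  have "W2sq \<mu> \<nu> \<le> (\<integral>\<^sup>+p. ennreal ((fst p - snd p)\<^sup>2) \<partial>?q)"
    unfolding W2sq_def by (rule INF_lower[OF quant_coupling[OF rm rn]])
  also have "\<dots> = (\<integral>\<^sup>+t. ennreal ((gen_inv \<mu> t - gen_inv \<nu> t)\<^sup>2) \<partial>Q01)"
    by (subst nn_integral_distr[OF quant_meas[OF rm rn] sm]) simp
  finally show "W2sq \<mu> \<nu> \<le> \<dots>" .
  show "(\<integral>\<^sup>+t. ennreal ((gen_inv \<mu> t - gen_inv \<nu> t)\<^sup>2) \<partial>Q01) \<le> W2sq \<mu> \<nu>"
    unfolding W2sq_def by (rule INF_greatest) (rule W2_lower[OF rm rn])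
qed


lemma var_identity:
  fixes w x :: "'k \<Rightarrow> real"
  assumes "finite I" "(\<Sum>s\<in>I. w s) = 1"
  shows "(\<Sum>s\<in>I. w s * (x s - y)\<^sup>2) = (\<Sum>s\<in>I. w s * (x s - (\<Sum>s'\<in>I. w s' * x s'))\<^sup>2)
            + ((\<Sum>s'\<in>I. w s' * x s') - y)\<^sup>2"
proof -
  define b where "b = (\<Sum>s'\<in>I. w s' * x s')"
  have "(\<Sum>s\<in>I. w s * (x s - y)\<^sup>2) =
        (\<Sum>s\<in>I. w s * (x s - b)\<^sup>2 + 2 * (b - y) * (w s * x s) - 2 * (b - y) * b * w s + (b - y)\<^sup>2 * w s)"
    by (rule sum.cong) (auto simp: power2_eq_square algebra_simps)
  also have "\<dots> = (\<Sum>s\<in>I. w s * (x s - b)\<^sup>2) + 2 * (b - y) * b - 2 * (b - y) * b * 1 + (b - y)\<^sup>2 * 1"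
    by (simp add: sum.distrib sum_subtractf sum_distrib_left[symmetric] assms b_def)
  finally show ?thesis by (simp add: b_def)
qed

lemma eps_ineq:
  fixes a b c e :: real
  assumes "e > 0"
  shows "(a - c)\<^sup>2 \<le> (1 + e) * (a - b)\<^sup>2 + (1 + 1 / e) * (b - c)\<^sup>2"
proof -
  have "0 \<le> (e * (a - b) - (b - c))\<^sup>2 / e" using assms by simp
  also have "(e * (a - b) - (b - c))\<^sup>2 / e = e * (a - b)\<^sup>2 - 2 * (a - b) * (b - c) + (b - c)\<^sup>2 / e"
    using assms by (simp add: power2_eq_square field_simps)
  finally have "2 * (a - b) * (b - c) \<le> e * (a - b)\<^sup>2 + (b - c)\<^sup>2 / e" by simp
  moreover have "(a - c)\<^sup>2 = (a - b)\<^sup>2 + 2 * (a - b) * (b - c) + (b - c)\<^sup>2"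
    by (simp add: power2_eq_square algebra_simps)
  ultimately show ?thesis by (simp add: algebra_simps)
qed

lemma le_eps_lemma:
  fixes a b c :: real
  assumes "c \<ge> 0" "\<And>d. d > 0 \<Longrightarrow> a \<le> b + d * c"
  shows "a \<le> b"
proof (rule field_le_epsilon)
  fix e :: real assume e: "e > 0"
  have "a \<le> b + (e / (c + 1)) * c" using assms(2)[of "e / (c + 1)"] e assms(1) by simp
  also have "(e / (c + 1)) * c \<le> e" using e assms(1) by (simp add: field_simps)
  finally show "a \<le> b + e" by simp
qed

lemma sqrt_tri_lemma:
  fixes r u v :: real
  assumes r: "r \<ge> 0" and u: "u \<ge> 0" and v: "v \<ge> 0"
    and H: "\<And>e h. e > 0 \<Longrightarrow> h > 0 \<Longrightarrow> v \<le> (1 + e) * r + (1 + 1 / e) * (u + h)"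
  shows "sqrt v \<le> sqrt r + sqrt u"
proof -
  have step: "v \<le> (sqrt r + sqrt u')\<^sup>2" if hu: "u' > 0" "\<And>e. e > 0 \<Longrightarrow> v \<le> (1 + e) * r + (1 + 1 / e) * u'" for u'
  proof (rule le_eps_lemma[of "sqrt u'"])
    show "sqrt u' \<ge> 0" using hu(1) by simp
    fix d :: real assume d: "d > 0"
    define e where "e = sqrt u' / (sqrt r + d)"
    have sr: "sqrt r \<ge> 0" using r by simp
    have su: "sqrt u' > 0" using hu(1) by simp
    have den: "sqrt r + d > 0" using d sr by linarith
    have e: "e > 0" unfolding e_def using su den by simp
    have 1: "(1 + e) * r \<le> r + sqrt u' * sqrt r"
    proof -
      have "e * r = sqrt u' * (sqrt r * sqrt r) / (sqrt r + d)"
        unfolding e_def using r by (simp add: real_sqrt_mult_self)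
      also have "\<dots> \<le> sqrt u' * sqrt r"
      proof -
        have "sqrt r * sqrt r \<le> sqrt r * (sqrt r + d)" using sr d by (intro mult_left_mono) auto
        then have "sqrt r * sqrt r / (sqrt r + d) \<le> sqrt r" using den by (simp add: divide_le_eq)
        then show ?thesis using su
          by (metis mult_left_mono order_less_imp_le times_divide_eq_right)
      qed
      finally show ?thesis by (simp add: algebra_simps)
    qed
    have 2: "(1 + 1 / e) * u' = u' + (sqrt r + d) * sqrt u'"
    proof -
      have "u' / e = (sqrt r + d) * sqrt u'"
        unfolding e_def using hu(1) su den by (simp add: field_simps)
      then show ?thesis by (simp add: algebra_simps)
    qed
    have "v \<le> (1 + e) * r + (1 + 1 / e) * u'" by (rule hu(2)[OF e])
    also have "\<dots> \<le> r + sqrt u' * sqrt r + u' + (sqrt r + d) * sqrt u'" using 1 2 by simp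
    also have "\<dots> = (sqrt r + sqrt u')\<^sup>2 + d * sqrt u'"
      using r hu(1) by (simp add: power2_eq_square algebra_simps)
    finally show "v \<le> (sqrt r + sqrt u')\<^sup>2 + d * sqrt u'" .
  qed
  have "sqrt v \<le> sqrt r + sqrt u + sqrt h" if h: "h > 0" for h
  proof -
    have "v \<le> (sqrt r + sqrt (u + h))\<^sup>2"
      by (rule step) (use u h H[OF _ h] in auto)
    then have "sqrt v \<le> sqrt ((sqrt r + sqrt (u + h))\<^sup>2)" by (rule real_sqrt_le_mono)
    also have "\<dots> = sqrt r + sqrt (u + h)" using r u h by simp
    finally have "sqrt v \<le> sqrt r + sqrt (u + h)" .
    also have "sqrt (u + h) \<le> sqrt u + sqrt h" using u h by (intro sqrt_add_le_add_sqrt) auto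
    finally show ?thesis by simp
  qed
  show ?thesis
  proof (rule field_le_epsilon)
    fix e :: real assume "e > 0"
    have "sqrt v \<le> sqrt r + sqrt u + sqrt (e\<^sup>2)" using \<open>e > 0\<close> by (intro \<open>\<And>h. h > 0 \<Longrightarrow> _\<close>) simp
    then show "sqrt v \<le> sqrt r + sqrt u + e" using \<open>e > 0\<close> by simp
  qed
qed


lemma joint_coupling:
  assumes N: "prob_space N" and a: "a \<in> borel_measurable N" and b: "b \<in> borel_measurable N"
  shows "distr N borel (\<lambda>t. (a t, b t)) \<in> couplings (distr N borel a) (distr N borel b)"
proof -
  let ?f = "\<lambda>t. (a t, b t)"
  have fm0: "?f \<in> measurable N (borel \<Otimes>\<^sub>M borel)" by (intro measurable_Pair a b)
  then have fm: "?f \<in> measurable N borel" unfolding borel_prod .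
  have 1: "distr (distr N borel ?f) borel fst = distr N borel a"
    by (subst distr_distr[OF fst_meas[OF refl] fm]) (simp add: comp_def)
  have 2: "distr (distr N borel ?f) borel snd = distr N borel b"
    by (subst distr_distr[OF snd_meas[OF refl] fm]) (simp add: comp_def)
  have 3: "prob_space (distr N borel ?f)"
    by (rule prob_space.prob_space_distr[OF N fm])
  show ?thesis using 1 2 3 by (simp add: couplings_def)
qed

lemma W2_le_joint:
  assumes N: "prob_space N" and a: "a \<in> borel_measurable N" and b: "b \<in> borel_measurable N"
  shows "W2sq (distr N borel a) (distr N borel b) \<le> (\<integral>\<^sup>+t. ennreal ((a t - b t)\<^sup>2) \<partial>N)"
proof -
  let ?f = "\<lambda>t. (a t, b t)"
  have fm0: "?f \<in> measurable N (borel \<Otimes>\<^sub>M borel)" by (intro measurable_Pair a b)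
  then have fm: "?f \<in> measurable N borel" unfolding borel_prod .
  have sm: "(\<lambda>p::real\<times>real. ennreal ((fst p - snd p)\<^sup>2)) \<in> borel_measurable (distr N borel ?f)"
    by (subst measurable_distr_eq1) (rule sqdiff_meas)
  have "W2sq (distr N borel a) (distr N borel b) \<le> (\<integral>\<^sup>+p. ennreal ((fst p - snd p)\<^sup>2) \<partial>distr N borel ?f)"
    unfolding W2sq_def by (rule INF_lower[OF joint_coupling[OF N a b]])
  also have "\<dots> = (\<integral>\<^sup>+t. ennreal ((a t - b t)\<^sup>2) \<partial>N)"
    by (subst nn_integral_distr[OF fm sm]) simp
  finally show ?thesis .
qed

lemma wsum_int:
  fixes w :: "'k::finite \<Rightarrow> real"
  assumes w: "\<And>s. w s \<ge> 0" and h: "\<And>s t. h s t \<ge> 0" and hm: "\<And>s. (\<lambda>t. h s t) \<in> borel_measurable N"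
  shows "(\<Sum>s\<in>UNIV. ennreal (w s) * (\<integral>\<^sup>+t. ennreal (h s t) \<partial>N)) = (\<integral>\<^sup>+t. ennreal (\<Sum>s\<in>UNIV. w s * h s t) \<partial>N)"
proof -
  have "(\<Sum>s\<in>UNIV. ennreal (w s) * (\<integral>\<^sup>+t. ennreal (h s t) \<partial>N)) = (\<Sum>s\<in>UNIV. (\<integral>\<^sup>+t. ennreal (w s) * ennreal (h s t) \<partial>N))"
    by (rule sum.cong[OF refl], rule nn_integral_cmult[symmetric]) (use hm in measurable)
  also have "\<dots> = (\<integral>\<^sup>+t. (\<Sum>s\<in>UNIV. ennreal (w s) * ennreal (h s t)) \<partial>N)"
    by (rule nn_integral_sum[symmetric]) (use hm in measurable)
  also have "\<dots> = (\<integral>\<^sup>+t. ennreal (\<Sum>s\<in>UNIV. w s * h s t) \<partial>N)"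
    by (rule nn_integral_cong, subst sum_ennreal[symmetric]) (auto simp: ennreal_mult w h)
  finally show ?thesis .
qed

lemma cdf_measurable: "real_distribution \<mu> \<Longrightarrow> cdf \<mu> \<in> borel_measurable borel"
  by (rule borel_measurable_mono, rule monoI,
      rule finite_borel_measure.cdf_nondecreasing[OF real_distribution.finite_borel_measure_M])

locale setting =
  fixes M :: "'a measure" and X :: "'a \<Rightarrow> 'x::euclidean_space" and S :: "'a \<Rightarrow> 'k::finite"
    and fstar :: "'x \<Rightarrow> 'k \<Rightarrow> real" and w :: "'k \<Rightarrow> real"
  assumes PS: "prob_space M"
    and Xm: "X \<in> borel_measurable M"
    and Sm: "S \<in> measurable M (count_space UNIV)"
    and Spos: "\<forall>s. measure M {\<omega> \<in> space M. S \<omega> = s} > 0"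
    and fm: "pred_measurable fstar"
    and wpos: "\<forall>s. w s \<ge> 0" and wsum: "(\<Sum>s\<in>UNIV. w s) = 1"
    and AA: "assumption_A M X S fstar"
begin

definition A :: "'k \<Rightarrow> 'a set" where "A s = {\<omega> \<in> space M. S \<omega> = s}"

lemma A_sets: "A s \<in> sets M"
proof -
  have "S -` {s} \<inter> space M \<in> sets M" by (rule measurable_sets[OF Sm]) simp
  moreover have "S -` {s} \<inter> space M = A s" by (auto simp: A_def)
  ultimately show ?thesis by simp
qed

lemma A_emeasure: "emeasure M (A s) \<noteq> 0" "emeasure M (A s) \<noteq> \<infinity>"
proof -
  interpret prob_space M by (rule PS)
  have "measure M (A s) > 0" using Spos by (simp add: A_def)
  then show "emeasure M (A s) \<noteq> 0" "emeasure M (A s) \<noteq> \<infinity>"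
    by (auto simp: emeasure_eq_measure)
qed

abbreviation C :: "'k \<Rightarrow> 'a measure" where "C s \<equiv> cond_meas M S s"

lemma C_eq: "C s = uniform_measure M (A s)" by (simp add: cond_meas_def A_def)

lemma C_prob: "prob_space (C s)"
  unfolding C_eq by (rule prob_space_uniform_measure[OF A_emeasure])

lemma sets_C: "sets (C s) = sets M" unfolding C_eq by simp

lemma AE_C: "AE \<omega> in C s. S \<omega> = s"
  unfolding C_eq by (rule AE_uniform_measureI[OF A_sets]) (auto simp: A_def)

lemma comp_meas:
  assumes "pred_measurable f"
  shows "(\<lambda>\<omega>. f (X \<omega>) s) \<in> borel_measurable M"
proof -
  have "(\<lambda>x. f x s) \<in> borel_measurable borel" using assms by (simp add: pred_measurable_def)
  then show ?thesis using measurable_compose[OF Xm] by blast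
qed

lemma comp_meas_C:
  assumes "pred_measurable f"
  shows "(\<lambda>\<omega>. f (X \<omega>) s') \<in> borel_measurable (C s)"
  by (subst measurable_cong_sets[OF sets_C refl]) (rule comp_meas[OF assms])

lemma compS_meas_C:
  assumes "pred_measurable f"
  shows "(\<lambda>\<omega>. f (X \<omega>) (S \<omega>)) \<in> borel_measurable (C s)"
proof -
  have "(\<lambda>\<omega>. f (X \<omega>) (S \<omega>)) \<in> borel_measurable M"
    by (rule measurable_compose_countable'[where I=UNIV and g=S and f="\<lambda>i \<omega>. f (X \<omega>) i"])
       (auto intro: comp_meas[OF assms] Sm)
  then show ?thesis by (subst measurable_cong_sets[OF sets_C refl])
qed

lemma law_eq:
  assumes "pred_measurable f"
  shows "cond_law M X S f s = distr (C s) borel (\<lambda>\<omega>. f (X \<omega>) s)"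
  unfolding cond_law_def
  by (rule distr_cong_AE[OF refl refl _ compS_meas_C[OF assms] comp_meas_C[OF assms]])
     (rule AE_mp[OF AE_C], simp)

lemma rd_law:
  assumes "pred_measurable f"
  shows "real_distribution (cond_law M X S f s)"
  unfolding law_eq[OF assms]
  by (rule prob_space.real_distribution_distr[OF C_prob comp_meas_C[OF assms]])

abbreviation nu :: "'k \<Rightarrow> real measure" where "nu s \<equiv> cond_law M X S fstar s"
abbreviation g :: "'k \<Rightarrow> real \<Rightarrow> real" where "g s \<equiv> gen_inv (nu s)"

lemma rd_nu: "real_distribution (nu s)" by (rule rd_law[OF fm])
lemma nonatomic_nu: "nonatomic (nu s)" using AA by (simp add: assumption_A_def)
lemma mom_nu: "(\<integral>\<^sup>+y. ennreal (y\<^sup>2) \<partial>nu s) < \<top>" using AA by (simp add: assumption_A_def)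

definition B :: "real \<Rightarrow> real" where "B t = (\<Sum>s\<in>UNIV. w s * g s t)"

definition V :: ennreal where
  "V = (\<Sum>s\<in>UNIV. ennreal (w s) * (\<integral>\<^sup>+t. ennreal ((g s t - B t)\<^sup>2) \<partial>Q01))"

lemma g_meas[measurable]: "g s \<in> borel_measurable borel"
  by (rule gen_inv_measurable[OF rd_nu])

lemma g_meas_Q: "g s \<in> borel_measurable Q01"
  by (rule gen_inv_Q01_meas[OF rd_nu])

lemma B_meas[measurable]: "B \<in> borel_measurable borel"
  unfolding B_def[abs_def] by measurable

lemma B_meas_Q: "B \<in> borel_measurable Q01"
  by (rule measurable_restrict_space1) (simp add: measurable_cong_sets[OF sets_lborel refl])

end


lemma sqd_meas:
  fixes a b :: "_ \<Rightarrow> real"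
  assumes [measurable]: "a \<in> borel_measurable N" "b \<in> borel_measurable N"
  shows "(\<lambda>t. (a t - b t)\<^sup>2) \<in> borel_measurable N"
  by measurable

context setting begin

lemma risk_eq:
  assumes "pred_measurable f"
  shows "risk M X S w fstar f =
    (\<Sum>s\<in>UNIV. ennreal (w s) * (\<integral>\<^sup>+\<omega>. ennreal ((f (X \<omega>) s - fstar (X \<omega>) s)\<^sup>2) \<partial>C s))"
  unfolding risk_def
  by (rule sum.cong[OF refl], rule arg_cong2[where f="(*)", OF refl], rule nn_integral_cong_AE)
     (rule AE_mp[OF AE_C], simp)

lemma P2_rd: "\<nu> \<in> P2 \<Longrightarrow> real_distribution \<nu>"
  unfolding P2_def real_distribution_def real_distribution_axioms_def by auto

lemma unf_eq:
  assumes "pred_measurable f"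
  shows "unfairness M X S w f = (INF \<nu>\<in>P2. \<Sum>s\<in>UNIV. ennreal (w s) *
     (\<integral>\<^sup>+t. ennreal ((gen_inv (cond_law M X S f s) t - gen_inv \<nu> t)\<^sup>2) \<partial>Q01))"
  unfolding unfairness_def
  by (rule INF_cong[OF refl], rule sum.cong[OF refl], rule arg_cong2[where f="(*)", OF refl])
     (rule W2_formula[OF rd_law[OF assms] P2_rd])

lemma g_sq: "(\<integral>\<^sup>+t. ennreal ((g s t)\<^sup>2) \<partial>Q01) = (\<integral>\<^sup>+y. ennreal (y\<^sup>2) \<partial>nu s)"
proof -
  have "(\<integral>\<^sup>+y. ennreal (y\<^sup>2) \<partial>nu s) = (\<integral>\<^sup>+y. ennreal (y\<^sup>2) \<partial>distr Q01 borel (g s))"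
    by (simp add: distr_gen_inv[OF rd_nu])
  also have "\<dots> = (\<integral>\<^sup>+t. ennreal ((g s t)\<^sup>2) \<partial>Q01)"
    by (rule nn_integral_distr[OF g_meas_Q]) simp
  finally show ?thesis ..
qed

lemma g_sq_fin: "(\<integral>\<^sup>+t. ennreal ((g s t)\<^sup>2) \<partial>Q01) < \<top>"
  unfolding g_sq by (rule mom_nu)

lemma var_B: "(\<Sum>s\<in>UNIV. w s * (g s t - y)\<^sup>2) = (\<Sum>s\<in>UNIV. w s * (g s t - B t)\<^sup>2) + (B t - y)\<^sup>2"
  unfolding B_def by (rule var_identity) (simp_all add: wsum)

lemma B_sq_le: "(B t)\<^sup>2 \<le> (\<Sum>s\<in>UNIV. w s * (g s t)\<^sup>2)"
proof -
  have "(\<Sum>s\<in>UNIV. w s * (g s t)\<^sup>2) = (\<Sum>s\<in>UNIV. w s * (g s t - B t)\<^sup>2) + (B t)\<^sup>2"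
    using var_B[of t 0] by simp
  moreover have "(\<Sum>s\<in>UNIV. w s * (g s t - B t)\<^sup>2) \<ge> 0"
    by (intro sum_nonneg mult_nonneg_nonneg) (use wpos in auto)
  ultimately show ?thesis by linarith
qed

lemma sum_fin:
  fixes F :: "'k \<Rightarrow> ennreal"
  assumes "\<And>s. F s < \<top>"
  shows "(\<Sum>s\<in>UNIV. ennreal (w s) * F s) < \<top>"
proof -
  have "(\<Sum>s\<in>UNIV. ennreal (w s) * F s) \<noteq> \<top>"
    using assms by (simp add: ennreal_mult_eq_top_iff less_top)
  then show ?thesis by (simp add: top.not_eq_extremum)
qed

lemma B_sq_fin: "(\<integral>\<^sup>+t. ennreal ((B t)\<^sup>2) \<partial>Q01) < \<top>"
proof -
  have "(\<integral>\<^sup>+t. ennreal ((B t)\<^sup>2) \<partial>Q01) \<le> (\<integral>\<^sup>+t. ennreal (\<Sum>s\<in>UNIV. w s * (g s t)\<^sup>2) \<partial>Q01)"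
    by (intro nn_integral_mono ennreal_leI B_sq_le)
  also have "\<dots> = (\<Sum>s\<in>UNIV. ennreal (w s) * (\<integral>\<^sup>+t. ennreal ((g s t)\<^sup>2) \<partial>Q01))"
    by (rule wsum_int[symmetric]) (simp_all add: wpos g_meas_Q borel_measurable_power)
  also have "\<dots> < \<top>" by (intro sum_fin g_sq_fin)
  finally show ?thesis .
qed

lemma gB_fin: "(\<integral>\<^sup>+t. ennreal ((g s t - B t)\<^sup>2) \<partial>Q01) < \<top>"
proof -
  have "(\<integral>\<^sup>+t. ennreal ((g s t - B t)\<^sup>2) \<partial>Q01) \<le>
        (\<integral>\<^sup>+t. ennreal 2 * ennreal ((g s t)\<^sup>2) + ennreal 2 * ennreal ((B t)\<^sup>2) \<partial>Q01)"
  proof (rule nn_integral_mono)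
    fix t
    have "(g s t - B t)\<^sup>2 \<le> 2 * (g s t)\<^sup>2 + 2 * (B t)\<^sup>2"
    proof -
      have h: "2 * (g s t)\<^sup>2 + 2 * (B t)\<^sup>2 - (g s t - B t)\<^sup>2 = (g s t + B t)\<^sup>2"
        by (simp add: power2_eq_square algebra_simps)
      have "0 \<le> (g s t + B t)\<^sup>2" by simp
      then show ?thesis using h by linarith
    qed
    then have "ennreal ((g s t - B t)\<^sup>2) \<le> ennreal (2 * (g s t)\<^sup>2 + 2 * (B t)\<^sup>2)" by (rule ennreal_leI)
    also have "\<dots> = ennreal 2 * ennreal ((g s t)\<^sup>2) + ennreal 2 * ennreal ((B t)\<^sup>2)"
      by (simp add: ennreal_plus ennreal_mult)
    finally show "ennreal ((g s t - B t)\<^sup>2) \<le> ennreal 2 * ennreal ((g s t)\<^sup>2) + ennreal 2 * ennreal ((B t)\<^sup>2)" .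
  qed
  also have "\<dots> = ennreal 2 * (\<integral>\<^sup>+t. ennreal ((g s t)\<^sup>2) \<partial>Q01) + ennreal 2 * (\<integral>\<^sup>+t. ennreal ((B t)\<^sup>2) \<partial>Q01)"
    using g_meas_Q B_meas_Q by (simp add: nn_integral_add nn_integral_cmult)
  also have "\<dots> < \<top>" using g_sq_fin B_sq_fin by (simp add: ennreal_mult_less_top)
  finally show ?thesis .
qed

lemma V_fin: "V < \<top>"
  unfolding V_def by (intro sum_fin gB_fin)

lemma V_le_any:
  assumes "real_distribution \<nu>"
  shows "V \<le> (\<Sum>s\<in>UNIV. ennreal (w s) * (\<integral>\<^sup>+t. ennreal ((g s t - gen_inv \<nu> t)\<^sup>2) \<partial>Q01))"
proof -
  have gm: "gen_inv \<nu> \<in> borel_measurable Q01" by (rule gen_inv_Q01_meas[OF assms])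
  have "V = (\<integral>\<^sup>+t. ennreal (\<Sum>s\<in>UNIV. w s * (g s t - B t)\<^sup>2) \<partial>Q01)"
    unfolding V_def by (rule wsum_int) (simp_all add: wpos sqd_meas g_meas_Q B_meas_Q)
  also have "\<dots> \<le> (\<integral>\<^sup>+t. ennreal (\<Sum>s\<in>UNIV. w s * (g s t - gen_inv \<nu> t)\<^sup>2) \<partial>Q01)"
  proof (intro nn_integral_mono ennreal_leI)
    fix t
    have e: "(\<Sum>s\<in>UNIV. w s * (g s t - gen_inv \<nu> t)\<^sup>2) = (\<Sum>s\<in>UNIV. w s * (g s t - B t)\<^sup>2) + (B t - gen_inv \<nu> t)\<^sup>2"
      by (rule var_B)
    have "0 \<le> (B t - gen_inv \<nu> t)\<^sup>2" by simp
    then show "(\<Sum>s\<in>UNIV. w s * (g s t - B t)\<^sup>2) \<le> (\<Sum>s\<in>UNIV. w s * (g s t - gen_inv \<nu> t)\<^sup>2)"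
      using e by linarith
  qed
  also have "\<dots> = (\<Sum>s\<in>UNIV. ennreal (w s) * (\<integral>\<^sup>+t. ennreal ((g s t - gen_inv \<nu> t)\<^sup>2) \<partial>Q01))"
    by (rule wsum_int[symmetric]) (simp_all add: wpos sqd_meas g_meas_Q gm)
  finally show ?thesis .
qed

definition nuB :: "real measure" where "nuB = distr Q01 borel B"

lemma nuB_P2: "nuB \<in> P2"
proof -
  have "(\<integral>\<^sup>+y. ennreal (y\<^sup>2) \<partial>nuB) = (\<integral>\<^sup>+t. ennreal ((B t)\<^sup>2) \<partial>Q01)"
    unfolding nuB_def by (rule nn_integral_distr[OF B_meas_Q]) simp
  then show ?thesis
    using B_sq_fin prob_space.prob_space_distr[OF prob_Q01 B_meas_Q]
    by (simp add: P2_def nuB_def)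
qed

lemma W2_nu_nuB: "W2sq (nu s) nuB \<le> (\<integral>\<^sup>+t. ennreal ((g s t - B t)\<^sup>2) \<partial>Q01)"
proof -
  have "W2sq (distr Q01 borel (g s)) (distr Q01 borel B) \<le> (\<integral>\<^sup>+t. ennreal ((g s t - B t)\<^sup>2) \<partial>Q01)"
    by (rule W2_le_joint[OF prob_Q01 g_meas_Q B_meas_Q])
  then show ?thesis by (simp add: distr_gen_inv[OF rd_nu] nuB_def)
qed

lemma Ustar: "unfairness M X S w fstar = V"
proof (rule antisym)
  have "unfairness M X S w fstar \<le> (\<Sum>s\<in>UNIV. ennreal (w s) * W2sq (nu s) nuB)"
    unfolding unfairness_def by (rule INF_lower[OF nuB_P2])
  also have "\<dots> \<le> V"
    unfolding V_def by (intro sum_mono mult_left_mono W2_nu_nuB) simp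
  finally show "unfairness M X S w fstar \<le> V" .
  show "V \<le> unfairness M X S w fstar"
    unfolding unf_eq[OF fm] by (rule INF_greatest, rule V_le_any[OF P2_rd])
qed

end


lemma alg1: "((a::real) * y + (1 - a) * b - y)\<^sup>2 = (1 - a)\<^sup>2 * (y - b)\<^sup>2"
  by (simp add: power2_eq_square algebra_simps)
lemma alg2: "((a::real) * y + (1 - a) * b - b)\<^sup>2 = a\<^sup>2 * (y - b)\<^sup>2"
  by (simp add: power2_eq_square algebra_simps)

context setting begin

lemma cdf_nu_meas[measurable]: "cdf (nu s) \<in> borel_measurable borel"
  by (rule cdf_measurable[OF rd_nu])

lemma fstar_meas[measurable]: "(\<lambda>x. fstar x s) \<in> borel_measurable borel"
  using fm by (simp add: pred_measurable_def)

lemma falpha_eq: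
  "f_alpha M X S w fstar \<alpha> x s = sqrt \<alpha> * fstar x s + (1 - sqrt \<alpha>) * B (cdf (nu s) (fstar x s))"
  unfolding f_alpha_def B_def ..

lemma falpha_meas: "pred_measurable (f_alpha M X S w fstar \<alpha>)"
  unfolding pred_measurable_def falpha_eq by measurable

lemma Y_meas: "(\<lambda>\<omega>. fstar (X \<omega>) s) \<in> borel_measurable (C s)"
  by (rule comp_meas_C[OF fm])

lemma transfer:
  "(\<integral>\<^sup>+\<omega>. ennreal ((fstar (X \<omega>) s - B (cdf (nu s) (fstar (X \<omega>) s)))\<^sup>2) \<partial>C s) =
   (\<integral>\<^sup>+t. ennreal ((g s t - B t)\<^sup>2) \<partial>Q01)"
proof -
  let ?\<phi> = "\<lambda>y. ennreal ((y - B (cdf (nu s) y))\<^sup>2)"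
  have pm: "?\<phi> \<in> borel_measurable borel" by measurable
  have pm1: "?\<phi> \<in> borel_measurable (distr (C s) borel (\<lambda>\<omega>. fstar (X \<omega>) s))"
    by (subst measurable_distr_eq1) (rule pm)
  have pm2: "?\<phi> \<in> borel_measurable (distr Q01 borel (g s))"
    by (subst measurable_distr_eq1) (rule pm)
  have "(\<integral>\<^sup>+\<omega>. ?\<phi> (fstar (X \<omega>) s) \<partial>C s) = (\<integral>\<^sup>+y. ?\<phi> y \<partial>distr (C s) borel (\<lambda>\<omega>. fstar (X \<omega>) s))"
    by (rule nn_integral_distr[OF Y_meas pm1, symmetric])
  also have "\<dots> = (\<integral>\<^sup>+y. ?\<phi> y \<partial>nu s)" by (simp add: law_eq[OF fm])
  also have "\<dots> = (\<integral>\<^sup>+y. ?\<phi> y \<partial>distr Q01 borel (g s))" by (simp add: distr_gen_inv[OF rd_nu])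
  also have "\<dots> = (\<integral>\<^sup>+t. ?\<phi> (g s t) \<partial>Q01)"
    by (rule nn_integral_distr[OF g_meas_Q pm2])
  also have "\<dots> = (\<integral>\<^sup>+t. ennreal ((g s t - B t)\<^sup>2) \<partial>Q01)"
    by (rule nn_integral_cong) (simp add: space_restrict_space cdf_gen_inv[OF rd_nu nonatomic_nu])
  finally show ?thesis .
qed

lemma marg_B: "distr (C s) borel (\<lambda>\<omega>. B (cdf (nu s) (fstar (X \<omega>) s))) = nuB"
proof -
  have h: "(\<lambda>y. B (cdf (nu s) y)) \<in> borel_measurable borel" by measurable
  have "distr (C s) borel (\<lambda>\<omega>. B (cdf (nu s) (fstar (X \<omega>) s))) =
        distr (distr (C s) borel (\<lambda>\<omega>. fstar (X \<omega>) s)) borel (\<lambda>y. B (cdf (nu s) y))"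
    by (subst distr_distr[OF h Y_meas]) (simp add: comp_def)
  also have "\<dots> = distr (nu s) borel (\<lambda>y. B (cdf (nu s) y))" by (simp add: law_eq[OF fm])
  also have "\<dots> = distr (distr Q01 borel (g s)) borel (\<lambda>y. B (cdf (nu s) y))"
    by (simp add: distr_gen_inv[OF rd_nu])
  also have "\<dots> = distr Q01 borel (\<lambda>t. B (cdf (nu s) (g s t)))"
    by (subst distr_distr[OF h g_meas_Q]) (simp add: comp_def)
  also have "\<dots> = distr Q01 borel B"
    by (rule distr_cong[OF refl refl]) (simp add: space_restrict_space cdf_gen_inv[OF rd_nu nonatomic_nu])
  finally show ?thesis unfolding nuB_def .
qed

lemma R_falpha:
  assumes "0 \<le> \<alpha>"
  shows "risk M X S w fstar (f_alpha M X S w fstar \<alpha>) = ennreal ((1 - sqrt \<alpha>)\<^sup>2) * V"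
proof -
  have "risk M X S w fstar (f_alpha M X S w fstar \<alpha>) =
    (\<Sum>s\<in>UNIV. ennreal (w s) * (\<integral>\<^sup>+\<omega>. ennreal ((f_alpha M X S w fstar \<alpha> (X \<omega>) s - fstar (X \<omega>) s)\<^sup>2) \<partial>C s))"
    by (rule risk_eq[OF falpha_meas])
  also have "\<dots> = (\<Sum>s\<in>UNIV. ennreal (w s) * (ennreal ((1 - sqrt \<alpha>)\<^sup>2) *
        (\<integral>\<^sup>+\<omega>. ennreal ((fstar (X \<omega>) s - B (cdf (nu s) (fstar (X \<omega>) s)))\<^sup>2) \<partial>C s)))"
  proof (rule sum.cong[OF refl], rule arg_cong2[where f="(*)", OF refl])
    fix s
    have "(\<integral>\<^sup>+\<omega>. ennreal ((f_alpha M X S w fstar \<alpha> (X \<omega>) s - fstar (X \<omega>) s)\<^sup>2) \<partial>C s) =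
          (\<integral>\<^sup>+\<omega>. ennreal ((1 - sqrt \<alpha>)\<^sup>2) * ennreal ((fstar (X \<omega>) s - B (cdf (nu s) (fstar (X \<omega>) s)))\<^sup>2) \<partial>C s)"
    proof (rule nn_integral_cong)
      fix \<omega>
      have "(f_alpha M X S w fstar \<alpha> (X \<omega>) s - fstar (X \<omega>) s)\<^sup>2 =
            (1 - sqrt \<alpha>)\<^sup>2 * (fstar (X \<omega>) s - B (cdf (nu s) (fstar (X \<omega>) s)))\<^sup>2"
        unfolding falpha_eq by (rule alg1)
      then show "ennreal ((f_alpha M X S w fstar \<alpha> (X \<omega>) s - fstar (X \<omega>) s)\<^sup>2) =
          ennreal ((1 - sqrt \<alpha>)\<^sup>2) * ennreal ((fstar (X \<omega>) s - B (cdf (nu s) (fstar (X \<omega>) s)))\<^sup>2)"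
        by (simp add: ennreal_mult)
    qed
    also have "\<dots> = ennreal ((1 - sqrt \<alpha>)\<^sup>2) *
        (\<integral>\<^sup>+\<omega>. ennreal ((fstar (X \<omega>) s - B (cdf (nu s) (fstar (X \<omega>) s)))\<^sup>2) \<partial>C s)"
      by (rule nn_integral_cmult) (use Y_meas in measurable)
    finally show "(\<integral>\<^sup>+\<omega>. ennreal ((f_alpha M X S w fstar \<alpha> (X \<omega>) s - fstar (X \<omega>) s)\<^sup>2) \<partial>C s) = \<dots>" .
  qed
  also have "\<dots> = ennreal ((1 - sqrt \<alpha>)\<^sup>2) * V"
    unfolding V_def transfer by (simp add: sum_distrib_left algebra_simps)
  finally show ?thesis .
qed

lemma U_falpha_le:
  assumes "0 \<le> \<alpha>"
  shows "unfairness M X S w (f_alpha M X S w fstar \<alpha>) \<le> ennreal \<alpha> * V"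
proof -
  let ?f = "f_alpha M X S w fstar \<alpha>"
  have "unfairness M X S w ?f \<le> (\<Sum>s\<in>UNIV. ennreal (w s) * W2sq (cond_law M X S ?f s) nuB)"
    unfolding unfairness_def by (rule INF_lower[OF nuB_P2])
  also have "\<dots> \<le> (\<Sum>s\<in>UNIV. ennreal (w s) * (ennreal \<alpha> * (\<integral>\<^sup>+t. ennreal ((g s t - B t)\<^sup>2) \<partial>Q01)))"
  proof (intro sum_mono mult_left_mono)
    fix s
    have bm: "(\<lambda>\<omega>. B (cdf (nu s) (fstar (X \<omega>) s))) \<in> borel_measurable (C s)"
      using Y_meas by measurable
    have "W2sq (cond_law M X S ?f s) nuB =
          W2sq (distr (C s) borel (\<lambda>\<omega>. ?f (X \<omega>) s)) (distr (C s) borel (\<lambda>\<omega>. B (cdf (nu s) (fstar (X \<omega>) s))))"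
      by (simp add: law_eq[OF falpha_meas] marg_B)
    also have "\<dots> \<le> (\<integral>\<^sup>+\<omega>. ennreal ((?f (X \<omega>) s - B (cdf (nu s) (fstar (X \<omega>) s)))\<^sup>2) \<partial>C s)"
      by (rule W2_le_joint[OF C_prob comp_meas_C[OF falpha_meas] bm])
    also have "\<dots> = (\<integral>\<^sup>+\<omega>. ennreal \<alpha> * ennreal ((fstar (X \<omega>) s - B (cdf (nu s) (fstar (X \<omega>) s)))\<^sup>2) \<partial>C s)"
    proof (rule nn_integral_cong)
      fix \<omega>
      have "(?f (X \<omega>) s - B (cdf (nu s) (fstar (X \<omega>) s)))\<^sup>2 =
            (sqrt \<alpha>)\<^sup>2 * (fstar (X \<omega>) s - B (cdf (nu s) (fstar (X \<omega>) s)))\<^sup>2"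
        unfolding falpha_eq by (rule alg2)
      also have "(sqrt \<alpha>)\<^sup>2 = \<alpha>" using assms by simp
      finally show "ennreal ((?f (X \<omega>) s - B (cdf (nu s) (fstar (X \<omega>) s)))\<^sup>2) =
          ennreal \<alpha> * ennreal ((fstar (X \<omega>) s - B (cdf (nu s) (fstar (X \<omega>) s)))\<^sup>2)"
        using assms by (simp add: ennreal_mult)
    qed
    also have "\<dots> = ennreal \<alpha> * (\<integral>\<^sup>+\<omega>. ennreal ((fstar (X \<omega>) s - B (cdf (nu s) (fstar (X \<omega>) s)))\<^sup>2) \<partial>C s)"
      by (rule nn_integral_cmult) (use Y_meas in measurable)
    also have "\<dots> = ennreal \<alpha> * (\<integral>\<^sup>+t. ennreal ((g s t - B t)\<^sup>2) \<partial>Q01)"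
      by (simp add: transfer)
    finally show "W2sq (cond_law M X S ?f s) nuB \<le> \<dots>" .
  qed simp
  also have "\<dots> = ennreal \<alpha> * V"
    unfolding V_def by (simp add: sum_distrib_left algebra_simps)
  finally show ?thesis .
qed

end


lemma key_real:
  fixes \<alpha> v r u :: real
  assumes a: "0 \<le> \<alpha>" "\<alpha> \<le> 1" and v: "0 \<le> v" and r: "0 \<le> r" and u: "0 \<le> u"
    and T: "sqrt v \<le> sqrt r + sqrt u" and rl: "r \<le> (1 - sqrt \<alpha>)\<^sup>2 * v" and ul: "u \<le> \<alpha> * v"
  shows "r = (1 - sqrt \<alpha>)\<^sup>2 * v \<and> u = \<alpha> * v"
proof -
  have sa: "sqrt \<alpha> \<le> 1" using a by simp
  have sa0: "0 \<le> sqrt \<alpha>" using a by simp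
  have e1: "sqrt ((1 - sqrt \<alpha>)\<^sup>2 * v) = (1 - sqrt \<alpha>) * sqrt v"
    using sa by (simp add: real_sqrt_mult)
  have e2: "sqrt (\<alpha> * v) = sqrt \<alpha> * sqrt v" by (simp add: real_sqrt_mult)
  have s1: "sqrt r \<le> (1 - sqrt \<alpha>) * sqrt v" using real_sqrt_le_mono[OF rl] e1 by simp
  have s2: "sqrt u \<le> sqrt \<alpha> * sqrt v" using real_sqrt_le_mono[OF ul] e2 by simp
  have q1: "sqrt r = (1 - sqrt \<alpha>) * sqrt v" using s1 s2 T by (simp add: algebra_simps)
  have q2: "sqrt u = sqrt \<alpha> * sqrt v" using s1 s2 T by (simp add: algebra_simps)
  have "r = (sqrt r)\<^sup>2" using r by simp
  also have "\<dots> = (1 - sqrt \<alpha>)\<^sup>2 * v" using q1 v by (simp add: power_mult_distrib)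
  finally have 1: "r = (1 - sqrt \<alpha>)\<^sup>2 * v" .
  have "u = (sqrt u)\<^sup>2" using u by simp
  also have "\<dots> = \<alpha> * v" using q2 v a by (simp add: power_mult_distrib)
  finally show ?thesis using 1 by simp
qed

context setting begin

lemma Tri:
  assumes fmeas: "pred_measurable f" and R: "risk M X S w fstar f = ennreal r" and U: "unfairness M X S w f = ennreal u"
    and r: "r \<ge> 0" and u: "u \<ge> 0" and Vv: "V = ennreal v" and v: "v \<ge> 0"
  shows "sqrt v \<le> sqrt r + sqrt u"
proof (rule sqrt_tri_lemma[OF r u v])
  fix e h :: real assume e: "e > 0" and h: "h > 0"
  let ?L = "\<lambda>s. cond_law M X S f s"
  let ?h = "\<lambda>s. gen_inv (?L s)"
  let ?\<Phi> = "\<lambda>\<nu>. \<Sum>s\<in>UNIV. ennreal (w s) * (\<integral>\<^sup>+t. ennreal ((?h s t - gen_inv \<nu> t)\<^sup>2) \<partial>Q01)"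
  have "unfairness M X S w f < ennreal (u + h)" using U h u by (simp add: ennreal_less_iff)
  then have "(INF \<nu>\<in>P2. ?\<Phi> \<nu>) < ennreal (u + h)" unfolding unf_eq[OF fmeas] .
  then obtain \<nu> where nP: "\<nu> \<in> P2" and nl: "?\<Phi> \<nu> < ennreal (u + h)" by (auto simp: INF_less_iff)
  have rn: "real_distribution \<nu>" by (rule P2_rd[OF nP])
  have gnm: "gen_inv \<nu> \<in> borel_measurable Q01" by (rule gen_inv_Q01_meas[OF rn])
  have hm: "?h s \<in> borel_measurable Q01" for s by (rule gen_inv_Q01_meas[OF rd_law[OF fmeas]])
  have e0: "0 \<le> 1 + e" "0 \<le> 1 + 1 / e" using e by auto
  have "V \<le> (\<Sum>s\<in>UNIV. ennreal (w s) * (\<integral>\<^sup>+t. ennreal ((g s t - gen_inv \<nu> t)\<^sup>2) \<partial>Q01))"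
    by (rule V_le_any[OF rn])
  also have "\<dots> \<le> (\<Sum>s\<in>UNIV. ennreal (w s) * (ennreal (1 + e) * (\<integral>\<^sup>+t. ennreal ((g s t - ?h s t)\<^sup>2) \<partial>Q01)
                   + ennreal (1 + 1 / e) * (\<integral>\<^sup>+t. ennreal ((?h s t - gen_inv \<nu> t)\<^sup>2) \<partial>Q01)))"
  proof (intro sum_mono mult_left_mono)
    fix s
    have "(\<integral>\<^sup>+t. ennreal ((g s t - gen_inv \<nu> t)\<^sup>2) \<partial>Q01) \<le>
          (\<integral>\<^sup>+t. ennreal (1 + e) * ennreal ((g s t - ?h s t)\<^sup>2) + ennreal (1 + 1 / e) * ennreal ((?h s t - gen_inv \<nu> t)\<^sup>2) \<partial>Q01)"
    proof (rule nn_integral_mono)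
      fix t
      have "ennreal ((g s t - gen_inv \<nu> t)\<^sup>2) \<le> ennreal ((1 + e) * (g s t - ?h s t)\<^sup>2 + (1 + 1 / e) * (?h s t - gen_inv \<nu> t)\<^sup>2)"
        by (rule ennreal_leI, rule eps_ineq[OF e])
      also have "\<dots> = ennreal (1 + e) * ennreal ((g s t - ?h s t)\<^sup>2) + ennreal (1 + 1 / e) * ennreal ((?h s t - gen_inv \<nu> t)\<^sup>2)"
        using e0 by (simp add: ennreal_plus ennreal_mult)
      finally show "ennreal ((g s t - gen_inv \<nu> t)\<^sup>2) \<le> \<dots>" .
    qed
    also have "\<dots> = ennreal (1 + e) * (\<integral>\<^sup>+t. ennreal ((g s t - ?h s t)\<^sup>2) \<partial>Q01)
                   + ennreal (1 + 1 / e) * (\<integral>\<^sup>+t. ennreal ((?h s t - gen_inv \<nu> t)\<^sup>2) \<partial>Q01)"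
      using g_meas_Q[of s] hm[of s] gnm by (simp add: nn_integral_add nn_integral_cmult sqd_meas)
    finally show "(\<integral>\<^sup>+t. ennreal ((g s t - gen_inv \<nu> t)\<^sup>2) \<partial>Q01) \<le> \<dots>" .
  qed simp
  also have "\<dots> = ennreal (1 + e) * (\<Sum>s\<in>UNIV. ennreal (w s) * W2sq (nu s) (?L s)) + ennreal (1 + 1 / e) * ?\<Phi> \<nu>"
    by (simp add: W2_formula[OF rd_nu rd_law[OF fmeas]] sum_distrib_left sum.distrib algebra_simps)
  also have "\<dots> \<le> ennreal (1 + e) * ennreal r + ennreal (1 + 1 / e) * ennreal (u + h)"
  proof (intro add_mono mult_left_mono order.refl)
    show "?\<Phi> \<nu> \<le> ennreal (u + h)" using nl by simp
    have "(\<Sum>s\<in>UNIV. ennreal (w s) * W2sq (nu s) (?L s)) \<le>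
          (\<Sum>s\<in>UNIV. ennreal (w s) * (\<integral>\<^sup>+\<omega>. ennreal ((f (X \<omega>) s - fstar (X \<omega>) s)\<^sup>2) \<partial>C s))"
    proof (intro sum_mono mult_left_mono)
      fix s
      have "W2sq (nu s) (?L s) = W2sq (distr (C s) borel (\<lambda>\<omega>. fstar (X \<omega>) s)) (distr (C s) borel (\<lambda>\<omega>. f (X \<omega>) s))"
        by (simp add: law_eq[OF fm] law_eq[OF fmeas])
      also have "\<dots> \<le> (\<integral>\<^sup>+\<omega>. ennreal ((fstar (X \<omega>) s - f (X \<omega>) s)\<^sup>2) \<partial>C s)"
        by (rule W2_le_joint[OF C_prob comp_meas_C[OF fm] comp_meas_C[OF fmeas]])
      also have "\<dots> = (\<integral>\<^sup>+\<omega>. ennreal ((f (X \<omega>) s - fstar (X \<omega>) s)\<^sup>2) \<partial>C s)"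
        by (simp add: power2_commute)
      finally show "W2sq (nu s) (?L s) \<le> \<dots>" .
    qed simp
    then show "(\<Sum>s\<in>UNIV. ennreal (w s) * W2sq (nu s) (?L s)) \<le> ennreal r"
      using risk_eq[OF fmeas] R by simp
  qed simp_all
  also have "\<dots> = ennreal ((1 + e) * r + (1 + 1 / e) * (u + h))"
    using e0 e r u h by (simp add: ennreal_plus ennreal_mult)
  finally have fin: "ennreal v \<le> ennreal ((1 + e) * r + (1 + 1 / e) * (u + h))" using Vv by simp
  have X0: "0 \<le> (1 + e) * r + (1 + 1 / e) * (u + h)"
    using e0 e r u h by (intro add_nonneg_nonneg mult_nonneg_nonneg) auto
  show "v \<le> (1 + e) * r + (1 + 1 / e) * (u + h)"
    using ennreal_le_iff[OF X0] fin by blast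
qed

end


context setting begin

lemma main:
  "{f. pareto_efficient M X S w fstar f} =
   {f. pred_measurable f \<and>
       (\<exists>\<alpha>\<in>{0..1}. risk M X S w fstar f = risk M X S w fstar (f_alpha M X S w fstar \<alpha>) \<and>
                    unfairness M X S w f = unfairness M X S w (f_alpha M X S w fstar \<alpha>))}"
proof -
  obtain v where Vv: "V = ennreal v" and v: "0 \<le> v"
    using V_fin by (cases V rule: ennreal_cases) (auto simp: top_unique)
  let ?R = "risk M X S w fstar" and ?U = "unfairness M X S w"
  let ?f = "f_alpha M X S w fstar"
  have RA: "?R (?f \<alpha>) = ennreal ((1 - sqrt \<alpha>)\<^sup>2 * v)" if "0 \<le> \<alpha>" for \<alpha>
    using R_falpha[OF that] Vv v by (simp add: ennreal_mult)
  have UA: "?U (?f \<alpha>) = ennreal (\<alpha> * v)" if a: "0 \<le> \<alpha>" "\<alpha> \<le> 1" for \<alpha>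
  proof -
    have le: "?U (?f \<alpha>) \<le> ennreal (\<alpha> * v)"
      using U_falpha_le[OF a(1)] Vv a v by (simp add: ennreal_mult)
    then obtain u where u: "?U (?f \<alpha>) = ennreal u" "0 \<le> u"
      by (cases "?U (?f \<alpha>)" rule: ennreal_cases) (auto simp: top_unique)
    have ul: "u \<le> \<alpha> * v" using le u a v by (simp add: ennreal_le_iff)
    have r0: "0 \<le> (1 - sqrt \<alpha>)\<^sup>2 * v" using v by simp
    have T: "sqrt v \<le> sqrt ((1 - sqrt \<alpha>)\<^sup>2 * v) + sqrt u"
      by (rule Tri[OF falpha_meas RA[OF a(1)] u(1) r0 u(2) Vv v])
    have "u = \<alpha> * v" using key_real[OF a v r0 u(2) T order.refl ul] by simp
    then show ?thesis using u by simp
  qed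
  have dom: "pareto_dominates M X S w fstar g f \<longleftrightarrow>
      (?R g \<le> ?R f \<and> ?U g < ?U f) \<or> (?R g < ?R f \<and> ?U g \<le> ?U f)" for g f
    by (simp add: pareto_dominates_def)
  show ?thesis
  proof (intro set_eqI iffI; simp only: mem_Collect_eq)
    fix f assume eff: "pareto_efficient M X S w fstar f"
    then have fmeas: "pred_measurable f" and nd: "\<And>g. pred_measurable g \<Longrightarrow> \<not> pareto_dominates M X S w fstar g f"
      by (auto simp: pareto_efficient_def)
    show "pred_measurable f \<and> (\<exists>\<alpha>\<in>{0..1}. ?R f = ?R (?f \<alpha>) \<and> ?U f = ?U (?f \<alpha>))"
    proof (cases "?U f < ennreal v")
      case False
      have R1: "?R (?f 1) = 0" using RA[of 1] by simp
      have U1: "?U (?f 1) = ennreal v" using UA[of 1] by simp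
      have "\<not> pareto_dominates M X S w fstar (?f 1) f" by (rule nd[OF falpha_meas])
      then have "\<not> ennreal v < ?U f" "\<not> 0 < ?R f" using False unfolding dom R1 U1 by auto
      then have "?U f = ennreal v" "?R f = 0" using False by auto
      then show ?thesis using fmeas R1 U1 by (intro conjI bexI[of _ 1]) auto
    next
      case True
      then obtain u where u: "?U f = ennreal u" "0 \<le> u"
        by (cases "?U f" rule: ennreal_cases) (auto simp: top_unique)
      have uv: "u < v" using True u v by (simp add: ennreal_less_iff)
      define \<alpha> where "\<alpha> = u / v"
      have a: "0 \<le> \<alpha>" "\<alpha> \<le> 1" using u uv by (auto simp: \<alpha>_def)
      have av: "\<alpha> * v = u" using uv u by (simp add: \<alpha>_def)
      have Ua: "?U (?f \<alpha>) = ?U f" using UA[OF a] av u by simp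
      have "\<not> pareto_dominates M X S w fstar (?f \<alpha>) f" by (rule nd[OF falpha_meas])
      then have "\<not> ?R (?f \<alpha>) < ?R f" unfolding dom Ua by auto
      then have Rle: "?R f \<le> ennreal ((1 - sqrt \<alpha>)\<^sup>2 * v)" using RA[OF a(1)] by simp
      then obtain r where r: "?R f = ennreal r" "0 \<le> r"
        by (cases "?R f" rule: ennreal_cases) (auto simp: top_unique)
      have rl: "r \<le> (1 - sqrt \<alpha>)\<^sup>2 * v" using Rle r v by (simp add: ennreal_le_iff)
      have T: "sqrt v \<le> sqrt r + sqrt u" by (rule Tri[OF fmeas r(1) u(1) r(2) u(2) Vv v])
      have "r = (1 - sqrt \<alpha>)\<^sup>2 * v" using key_real[OF a v r(2) u(2) T rl] av by simp
      then have "?R f = ?R (?f \<alpha>)" using r RA[OF a(1)] by simp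
      then show ?thesis using fmeas Ua a by (intro conjI bexI[of _ \<alpha>]) auto
    qed
  next
    fix f assume H: "pred_measurable f \<and> (\<exists>\<alpha>\<in>{0..1}. ?R f = ?R (?f \<alpha>) \<and> ?U f = ?U (?f \<alpha>))"
    then obtain \<alpha> where fmeas: "pred_measurable f" and a: "0 \<le> \<alpha>" "\<alpha> \<le> 1"
      and Rf: "?R f = ennreal ((1 - sqrt \<alpha>)\<^sup>2 * v)" and Uf: "?U f = ennreal (\<alpha> * v)"
      using RA UA by auto
    have "\<not> pareto_dominates M X S w fstar g f" if gm: "pred_measurable g" for g
    proof
      assume D: "pareto_dominates M X S w fstar g f"
      then have Rg: "?R g \<le> ennreal ((1 - sqrt \<alpha>)\<^sup>2 * v)" and Ug: "?U g \<le> ennreal (\<alpha> * v)"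
        unfolding dom Rf Uf by auto
      obtain r where r: "?R g = ennreal r" "0 \<le> r" using Rg by (cases "?R g" rule: ennreal_cases) (auto simp: top_unique)
      obtain u where u: "?U g = ennreal u" "0 \<le> u" using Ug by (cases "?U g" rule: ennreal_cases) (auto simp: top_unique)
      have r0: "0 \<le> (1 - sqrt \<alpha>)\<^sup>2 * v" using v by simp
      have u0: "0 \<le> \<alpha> * v" using v a by simp
      have rl: "r \<le> (1 - sqrt \<alpha>)\<^sup>2 * v" using Rg r r0 by (simp add: ennreal_le_iff)
      have ul: "u \<le> \<alpha> * v" using Ug u u0 by (simp add: ennreal_le_iff)
      have T: "sqrt v \<le> sqrt r + sqrt u" by (rule Tri[OF gm r(1) u(1) r(2) u(2) Vv v])
      have eq: "r = (1 - sqrt \<alpha>)\<^sup>2 * v" "u = \<alpha> * v" using key_real[OF a v r(2) u(2) T rl ul] by auto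
      then show False using D unfolding dom Rf Uf r u by auto
    qed
    then show "pareto_efficient M X S w fstar f" using fmeas by (auto simp: pareto_efficient_def)
  qed
qed

end


theorem proposition3:
  fixes M :: "'a measure" and X :: "'a \<Rightarrow> real ^ 'p" and S :: "'a \<Rightarrow> 'k::finite"
    and fstar :: "real ^ 'p \<Rightarrow> 'k \<Rightarrow> real" and w :: "'k \<Rightarrow> real"
  assumes "prob_space M"
    and "X \<in> borel_measurable M"
    and "S \<in> measurable M (count_space UNIV)"
    and "\<forall>s. measure M {\<omega> \<in> space M. S \<omega> = s} > 0"
    and "pred_measurable fstar"
    and "\<forall>s. w s \<ge> 0" and "(\<Sum>s\<in>UNIV. w s) = 1"
    and "assumption_A M X S fstar"
  shows "{f. pareto_efficient M X S w fstar f} =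
         {f. pred_measurable f \<and>
             (\<exists>\<alpha>\<in>{0..1}. risk M X S w fstar f = risk M X S w fstar (f_alpha M X S w fstar \<alpha>) \<and>
                          unfairness M X S w f = unfairness M X S w (f_alpha M X S w fstar \<alpha>))}"
proof -
  interpret setting M X S fstar w by (rule setting.intro[OF assms])
  show ?thesis by (rule main)
qed

end
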